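(* Let $(R,B)$ be an EIC problem with problem graph $G$, and let $\mathcal{A}_{(R,B)}$ be the image of its column repetition function. Then the minimum length $(C)_{(R,B)}$ of a centralized linear broadcast solution to $(R,B)$ equals $\mathrm{rminrk}_2(G,\mathcal{A}_{(R,B)})$, the minimum of $\mathrm{rk}_2(A')$ over all $A'\in\mathcal{A}_{(R,B)}$ that fit $G$.
   Context: Let $n,m$ be positive integers. An EIC problem is a pair $(R,B)$ of matrices in $\mathbb{F}_2^{n\times m}$ with disjoint supports; node $u$ needs block $a$ if $R_{ua}=1$ and has block $a$ if $B_{ua}=1$. Requirement pairs: $P=\{(u,a): R_{ua}=1\}$. The problem graph $G=(V,E)$ is the directed graph with vertices $V=\{v_{(u,a)}:(u,a)\in P\}$ and an edge from $v_{(u,a)}$ to $v_{(w,b)}$ iff $B_{ub}=1$ or $a=b$. $B_u$ is the $u$-th row of $B$, $\mathrm{diag}(B_u)$ the diagonal matrix with $B_u$ on the diagonal, $\boldsymbol e_a$ the $a$-th standard basis row vector of $\mathbb{F}_2^m$. A matrix $A'\in\mathbb{F}_2^{|V|\times|V|}$ (indexed by $V$) fits $G$ if its diagonal entries are all $1$ and $A'_{xy}=0$ whenever $x\ne y$ and $(x,y)\notin E$. The column repetition function $\phi_{(R,B)}:\mathbb{F}_2^{|V|\times m}\to\mathbb{F}_2^{|V|\times|V|}$ sends $A$ to the matrix whose column indexed by $v_{(u,a)}$ is the $a$-th column of $A$; $\mathcal{A}_{(R,B)}$ is its image. A centralized linear broadcast solution is $\beta\in\mathbb{F}_2^{h\times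 m}$ such that for every $(u,a)\in P$ there is $\boldsymbol\alpha\in\mathbb{F}_2^{h+m}$ with $\boldsymbol e_a=\boldsymbol\alpha\cdot\left[\begin{smallmatrix}\beta\\ \mathrm{diag}(B_u)\end{smallmatrix}\right]$; its length is $h$, and $(C)_{(R,B)}$ denotes the minimum length. *)

theory Defs
  imports "Jordan_Normal_Form.DL_Rank" "HOL-Library.Z2"
begin

text \<open>Matrices over F_2 are Jordan_Normal_Form matrices with entries in the two-element
  field bit (HOL-Library.Z2). Nodes are indexed 0..<n, blocks 0..<m.\<close>

definition EIC_problem :: "nat \<Rightarrow> nat \<Rightarrow> bit mat \<Rightarrow> bit mat \<Rightarrow> bool" where
  "EIC_problem n m R B \<longleftrightarrow> R \<in> carrier_mat n m \<and> B \<in> carrier_mat n m \<and>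
     (\<forall>u<n. \<forall>a<m. \<not> (R $$ (u,a) = 1 \<and> B $$ (u,a) = 1))"

text \<open>Requirement pairs P, enumerated in a fixed (lexicographic) order; position i in
  this list is the index of vertex v_(u,a) of the problem graph.\<close>
definition req_pairs :: "bit mat \<Rightarrow> (nat \<times> nat) list" where
  "req_pairs R = [(u,a). u \<leftarrow> [0..<dim_row R], a \<leftarrow> [0..<dim_col R], R $$ (u,a) = 1]"

definition pg_edge :: "bit mat \<Rightarrow> nat \<times> nat \<Rightarrow> nat \<times> nat \<Rightarrow> bool" where
  "pg_edge B x y \<longleftrightarrow> B $$ (fst x, snd y) = 1 \<or> snd x = snd y"

definition fits :: "bit mat \<Rightarrow> bit mat \<Rightarrow> bit mat \<Rightarrow> bool" where
  "fits R B A' \<longleftrightarrow> (let ps = req_pairs R; k = length ps in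
     A' \<in> carrier_mat k k \<and> (\<forall>i<k. A' $$ (i,i) = 1) \<and>
     (\<forall>i<k. \<forall>j<k. i \<noteq> j \<and> \<not> pg_edge B (ps ! i) (ps ! j) \<longrightarrow> A' $$ (i,j) = 0))"

definition col_rep :: "bit mat \<Rightarrow> bit mat \<Rightarrow> bit mat" where
  "col_rep R A = (let ps = req_pairs R; k = length ps in
     mat k k (\<lambda>(i,j). A $$ (i, snd (ps ! j))))"

definition col_rep_image :: "bit mat \<Rightarrow> bit mat set" where
  "col_rep_image R = {col_rep R A | A. A \<in> carrier_mat (length (req_pairs R)) (dim_col R)}"

definition rk2 :: "bit mat \<Rightarrow> nat" where
  "rk2 A = vec_space.rank (dim_row A) A"

definition rminrk :: "bit mat \<Rightarrow> bit mat \<Rightarrow> nat" where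
  "rminrk R B = (LEAST r. \<exists>A' \<in> col_rep_image R. fits R B A' \<and> rk2 A' = r)"

definition diag_row :: "bit mat \<Rightarrow> nat \<Rightarrow> bit mat" where
  "diag_row B u = mat (dim_col B) (dim_col B) (\<lambda>(i,j). if i = j then B $$ (u,i) else 0)"

text \<open>beta (h x m) is a centralized linear broadcast solution: for each requirement pair
  (u,a) some alpha in F_2^(h+m) has alpha * [beta; diag(B_u)] = e_a (row vectors).\<close>
definition cl_broadcast_solution :: "bit mat \<Rightarrow> bit mat \<Rightarrow> nat \<Rightarrow> bit mat \<Rightarrow> bool" where
  "cl_broadcast_solution R B h \<beta> \<longleftrightarrow> \<beta> \<in> carrier_mat h (dim_col R) \<and>
     (\<forall>(u,a) \<in> set (req_pairs R). \<exists>\<alpha> \<in> carrier_vec (h + dim_col R).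
        transpose_mat (\<beta> @\<^sub>r diag_row B u) *\<^sub>v \<alpha> = unit_vec (dim_col R) a)"

definition min_broadcast_length :: "bit mat \<Rightarrow> bit mat \<Rightarrow> nat" where
  "min_broadcast_length R B = (LEAST h. \<exists>\<beta>. cl_broadcast_solution R B h \<beta>)"

end

theory Submission
  imports Defs
begin
declare add_bit_eq_xor[simp del] mult_bit_eq_and[simp del]
context vec_space begin

lemma rank_le_col_span:
  assumes A: "A \<in> carrier_mat n nc" and G: "G \<in> carrier_mat n h"
    and sub: "set (cols A) \<subseteq> span (set (cols G))"
  shows "rank A \<le> h"
proof -
  have cG: "set (cols G) \<subseteq> carrier_vec n" using G cols_dim by blast
  have cA: "set (cols A) \<subseteq> carrier_vec n" using A cols_dim by blast
  have incl: "span (set (cols A)) \<subseteq> span (set (cols G))" using span_subsetI[OF cG sub] .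
  have sG: "subspace class_ring (span (set (cols G))) V" using span_is_subspace cG by auto
  have sA: "subspace class_ring (span (set (cols A))) V" using span_is_subspace cA by auto
  have sub2: "subspace class_ring (span (set (cols A))) (vs (span (set (cols G))))"
    using nested_subspaces[OF sG sA incl] .
  have "rank A \<le> vectorspace.dim class_ring (vs (span (set (cols G))))" unfolding rank_def
    using vectorspace.subspace_dim[OF subspace_is_vs[OF sG] sub2 fin_dim_span_cols[OF G]] fin_dim_span_cols[OF A] by auto
  also have "\<dots> = rank G" unfolding rank_def by simp
  also have "\<dots> \<le> h" using rank_le_nc[OF G] .
  finally show ?thesis .
qed

lemma rank_factor:
  assumes A: "A \<in> carrier_mat n nc"
  shows "\<exists>G \<in> carrier_mat n (rank A). set (cols A) \<subseteq> span (set (cols G))"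
proof -
  obtain S where max: "maximal S (\<lambda>T. T \<subseteq> set (cols A) \<and> lin_indpt T)"
    using maximal_exists[of "(\<lambda>T. T \<subseteq> set (cols A) \<and> lin_indpt T)" "card (set (cols A))" "{}"]
    by (meson List.finite_set card_mono empty_iff empty_subsetI finite_lin_indpt2 rev_finite_subset)
  have r: "rank A = card S" using rank_card_indpt[OF A max] .
  have SA: "S \<subseteq> set (cols A)" "lin_indpt S" using max unfolding maximal_def by auto
  have cA: "set (cols A) \<subseteq> carrier_vec n" using A cols_dim by blast
  have cS: "S \<subseteq> carrier_vec n" using SA cA by auto
  have fS: "finite S" using SA(1) finite_subset by blast
  have "set (cols A) \<subseteq> span S"
  proof
    fix s assume s: "s \<in> set (cols A)"
    show "s \<in> span S"
    proof (rule ccontr)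
      assume ns: "s \<notin> span S"
      have sC: "s \<in> carrier_vec n" using s cA by auto
      have "s \<notin> S" using ns cS span_mem by auto
      have li: "lin_indpt (insert s S)" using lin_dep_iff_in_span[OF cS SA(2) sC \<open>s \<notin> S\<close>] ns by auto
      then have "(insert s S) \<subseteq> set (cols A) \<and> lin_indpt (insert s S)" using SA s by auto
      then show False using max \<open>s \<notin> S\<close> unfolding maximal_def by (metis subset_insertI insertI1 eq_iff)
    qed
  qed
  obtain xs where xs: "set xs = S" "distinct xs" using finite_distinct_list[OF fS] by blast
  define G where "G = mat_of_cols n xs"
  have "G \<in> carrier_mat n (rank A)" unfolding G_def r using xs distinct_card by fastforce
  moreover have "cols G = xs" unfolding G_def using xs cS by simp
  ultimately show ?thesis using \<open>set (cols A) \<subseteq> span S\<close> xs by auto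
qed

end

lemma set_req_pairs:
  "set (req_pairs R) = {(u,a). u < dim_row R \<and> a < dim_col R \<and> R $$ (u,a) = 1}"
  unfolding req_pairs_def by auto

lemma sol_entry:
  assumes \<beta>: "\<beta> \<in> carrier_mat h m" and Bc: "dim_col B = m"
    and \<alpha>: "\<alpha> \<in> carrier_vec (h+m)" and b: "b < m"
  shows "(transpose_mat (\<beta> @\<^sub>r diag_row B u) *\<^sub>v \<alpha>) $ b
         = (\<Sum>l<h. \<beta> $$ (l,b) * \<alpha> $ l) + B $$ (u,b) * \<alpha> $ (h+b)"
proof -
  have D: "diag_row B u \<in> carrier_mat m m" unfolding diag_row_def using Bc by auto
  have M: "\<beta> @\<^sub>r diag_row B u \<in> carrier_mat (h+m) m" using \<beta> D by auto
  have Mi: "(\<beta> @\<^sub>r diag_row B u) $$ (l,b) = (if l < h then \<beta> $$ (l,b) else diag_row B u $$ (l-h,b))"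
    if "l < h+m" for l
    using that \<beta> D b unfolding append_rows_def by auto
  have "(transpose_mat (\<beta> @\<^sub>r diag_row B u) *\<^sub>v \<alpha>) $ b
      = (\<Sum>l\<in>{0..<h+m}. (\<beta> @\<^sub>r diag_row B u) $$ (l,b) * \<alpha> $ l)"
    using M b \<alpha> by (auto simp: scalar_prod_def intro!: sum.cong)
  also have "\<dots> = (\<Sum>l\<in>{0..<h}. (\<beta> @\<^sub>r diag_row B u) $$ (l,b) * \<alpha> $ l)
      + (\<Sum>l\<in>{h..<h+m}. (\<beta> @\<^sub>r diag_row B u) $$ (l,b) * \<alpha> $ l)"
    by (rule sum.atLeastLessThan_concat[symmetric]) auto
  also have "(\<Sum>l\<in>{0..<h}. (\<beta> @\<^sub>r diag_row B u) $$ (l,b) * \<alpha> $ l) = (\<Sum>l<h. \<beta> $$ (l,b) * \<alpha> $ l)"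
    unfolding lessThan_atLeast0 using Mi by (intro sum.cong) auto
  also have "(\<Sum>l\<in>{h..<h+m}. (\<beta> @\<^sub>r diag_row B u) $$ (l,b) * \<alpha> $ l)
      = (\<Sum>l\<in>{0..<m}. (\<beta> @\<^sub>r diag_row B u) $$ (l+h,b) * \<alpha> $ (l+h))"
    using sum.shift_bounds_nat_ivl[of "\<lambda>l. (\<beta> @\<^sub>r diag_row B u) $$ (l,b) * \<alpha> $ l" 0 h m]
    by (simp only: add.commute add_0)
  also have "\<dots> = (\<Sum>l\<in>{0..<m}. (if l = b then B $$ (u,b) * \<alpha> $ (h+b) else 0))"
    using Mi b Bc by (intro sum.cong) (auto simp: diag_row_def add.commute)
  also have "\<dots> = B $$ (u,b) * \<alpha> $ (h+b)" using b by (subst sum.delta) auto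
  finally show ?thesis .
qed

lemma sol_char:
  assumes \<beta>: "\<beta> \<in> carrier_mat h m" and Bc: "dim_col B = m"
    and \<alpha>: "\<alpha> \<in> carrier_vec (h+m)" and a: "a < m"
    and e: "\<And>b. b < m \<Longrightarrow> (\<Sum>l<h. \<beta> $$ (l,b) * \<alpha> $ l) + B $$ (u,b) * \<alpha> $ (h+b) = unit_vec m a $ b"
  shows "transpose_mat (\<beta> @\<^sub>r diag_row B u) *\<^sub>v \<alpha> = unit_vec m a"
proof -
  have D: "diag_row B u \<in> carrier_mat m m" unfolding diag_row_def using Bc by auto
  have M: "\<beta> @\<^sub>r diag_row B u \<in> carrier_mat (h+m) m" using \<beta> D by auto
  show ?thesis
  proof (rule eq_vecI)
    fix b assume "b < dim_vec (unit_vec m a)"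
    then have b: "b < m" by simp
    show "(transpose_mat (\<beta> @\<^sub>r diag_row B u) *\<^sub>v \<alpha>) $ b = unit_vec m a $ b"
      unfolding sol_entry[OF \<beta> Bc \<alpha> b] by (rule e[OF b])
  qed (use M in simp)
qed

lemma bit_cancel: "(s::bit) + (e + s) = e"
  by (cases "s = 0"; cases "e = 0") (auto simp: add_bit_eq_xor)

lemma sol_intro:
  assumes "\<beta> \<in> carrier_mat h (dim_col R)"
    and "\<And>u a. (u,a) \<in> set (req_pairs R) \<Longrightarrow> \<exists>\<alpha>\<in>carrier_vec (h + dim_col R).
        transpose_mat (\<beta> @\<^sub>r diag_row B u) *\<^sub>v \<alpha> = unit_vec (dim_col R) a"
  shows "cl_broadcast_solution R B h \<beta>"
  using assms unfolding cl_broadcast_solution_def by auto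

lemma sol_elim:
  assumes "cl_broadcast_solution R B h \<beta>" "(u,a) \<in> set (req_pairs R)"
  shows "\<exists>\<alpha>\<in>carrier_vec (h + dim_col R).
        transpose_mat (\<beta> @\<^sub>r diag_row B u) *\<^sub>v \<alpha> = unit_vec (dim_col R) a"
  using assms unfolding cl_broadcast_solution_def by auto

lemma sol_carrier: "cl_broadcast_solution R B h \<beta> \<Longrightarrow> \<beta> \<in> carrier_mat h (dim_col R)"
  unfolding cl_broadcast_solution_def by auto

lemma col_rep_index:
  "i < length (req_pairs R) \<Longrightarrow> j < length (req_pairs R) \<Longrightarrow>
   col_rep R A $$ (i,j) = A $$ (i, snd (req_pairs R ! j))"
  unfolding col_rep_def Let_def by simp

lemma col_rep_carrier:
  "col_rep R A \<in> carrier_mat (length (req_pairs R)) (length (req_pairs R))"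
  unfolding col_rep_def Let_def by simp

lemma fitsI:
  assumes "A' \<in> carrier_mat (length (req_pairs R)) (length (req_pairs R))"
    and "\<And>i. i < length (req_pairs R) \<Longrightarrow> A' $$ (i,i) = 1"
    and "\<And>i j. i < length (req_pairs R) \<Longrightarrow> j < length (req_pairs R) \<Longrightarrow> i \<noteq> j \<Longrightarrow>
          \<not> pg_edge B (req_pairs R ! i) (req_pairs R ! j) \<Longrightarrow> A' $$ (i,j) = 0"
  shows "fits R B A'"
  using assms unfolding fits_def Let_def by auto

lemma fitsD:
  assumes "fits R B A'"
  shows "A' \<in> carrier_mat (length (req_pairs R)) (length (req_pairs R))"
    and "\<And>i. i < length (req_pairs R) \<Longrightarrow> A' $$ (i,i) = 1"
    and "\<And>i j. i < length (req_pairs R) \<Longrightarrow> j < length (req_pairs R) \<Longrightarrow> i \<noteq> j \<Longrightarrow>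
          \<not> pg_edge B (req_pairs R ! i) (req_pairs R ! j) \<Longrightarrow> A' $$ (i,j) = 0"
  using assms unfolding fits_def Let_def by auto

lemma col_rep_imageI:
  "A \<in> carrier_mat (length (req_pairs R)) (dim_col R) \<Longrightarrow> col_rep R A \<in> col_rep_image R"
  unfolding col_rep_image_def by blast

lemma col_rep_imageE:
  assumes "A' \<in> col_rep_image R"
  obtains A where "A \<in> carrier_mat (length (req_pairs R)) (dim_col R)" "A' = col_rep R A"
  using assms unfolding col_rep_image_def by blast

theorem theorem2:
  fixes n m :: nat and R B :: "bit mat"
  assumes "0 < n" and "0 < m"
    and "EIC_problem n m R B"
  shows "min_broadcast_length R B = rminrk R B"
proof -
  have Rc: "R \<in> carrier_mat n m" and Bcm: "B \<in> carrier_mat n m"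
    and disj: "\<And>u a. u < n \<Longrightarrow> a < m \<Longrightarrow> \<not> (R $$ (u,a) = 1 \<and> B $$ (u,a) = 1)"
    using assms(3) unfolding EIC_problem_def by auto
  define ps where "ps = req_pairs R"
  define k where "k = length ps"
  have dR: "dim_row R = n" "dim_col R = m" using Rc by auto
  have dB: "dim_col B = m" using Bcm by auto
  have psP: "fst (ps!i) < n \<and> snd (ps!i) < m \<and> R $$ (fst (ps!i), snd (ps!i)) = 1" if "i < k" for i
  proof -
    have "ps!i \<in> set ps" using that k_def by simp
    then show ?thesis unfolding ps_def set_req_pairs dR by (cases "ps!i") auto
  qed
  have Bz: "B $$ (fst (ps!i), snd (ps!i)) = 0" if "i < k" for i
    using disj[of "fst (ps!i)" "snd (ps!i)"] psP[OF that] by auto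
  have psmem: "ps!i \<in> set (req_pairs R)" if "i < k" for i using that unfolding k_def ps_def by simp
  interpret vs: vec_space "TYPE(bit)" k .

  have exC: "\<exists>\<beta>. cl_broadcast_solution R B m \<beta>"
  proof
    show "cl_broadcast_solution R B m (1\<^sub>m m)"
    proof (rule sol_intro)
      show "1\<^sub>m m \<in> carrier_mat m (dim_col R)" using dR by simp
      fix u a assume p: "(u,a) \<in> set (req_pairs R)"
      have a: "a < m" using p unfolding set_req_pairs dR by auto
      define \<alpha> where "\<alpha> = vec (m+m) (\<lambda>l. if l < m then unit_vec m a $ l else (0::bit))"
      have "transpose_mat (1\<^sub>m m @\<^sub>r diag_row B u) *\<^sub>v \<alpha> = unit_vec m a"
      proof (rule sol_char[OF _ dB _ a])
        fix b assume b: "b < m"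
        have "(\<Sum>l<m. (1\<^sub>m m) $$ (l,b) * \<alpha> $ l) = (\<Sum>l<m. if l = b then unit_vec m a $ b else 0)"
          using b unfolding \<alpha>_def by (intro sum.cong) auto
        also have "\<dots> = unit_vec m a $ b" using b by simp
        finally show "(\<Sum>l<m. (1\<^sub>m m) $$ (l,b) * \<alpha> $ l) + B $$ (u,b) * \<alpha> $ (m+b) = unit_vec m a $ b"
          using b unfolding \<alpha>_def by simp
      qed (auto simp: \<alpha>_def)
      then show "\<exists>\<alpha>\<in>carrier_vec (m + dim_col R).
        transpose_mat (1\<^sub>m m @\<^sub>r diag_row B u) *\<^sub>v \<alpha> = unit_vec (dim_col R) a"
        using dR by (intro bexI[of _ \<alpha>]) (auto simp: \<alpha>_def)
    qed
  qed
  define C where "C = min_broadcast_length R B"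
  obtain \<beta>0 where sol0: "cl_broadcast_solution R B C \<beta>0"
    using LeastI_ex[of "\<lambda>h. \<exists>\<beta>. cl_broadcast_solution R B h \<beta>"] exC unfolding C_def min_broadcast_length_def by blast
  have C_le: "C \<le> h" if "cl_broadcast_solution R B h \<beta>" for h \<beta>
    unfolding C_def min_broadcast_length_def using that by (intro Least_le) blast

  define A1 where "A1 = mat k m (\<lambda>(i,b). if b = snd (ps!i) then 1 else (0::bit))"
  have A1c: "A1 \<in> carrier_mat k m" unfolding A1_def by simp
  have fit1: "fits R B (col_rep R A1)"
  proof (rule fitsI)
    show "col_rep R A1 \<in> carrier_mat (length (req_pairs R)) (length (req_pairs R))"
      by (rule col_rep_carrier)
    fix i assume i: "i < length (req_pairs R)"
    then show "col_rep R A1 $$ (i,i) = 1"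
      using psP[of i] unfolding col_rep_index[OF i i] A1_def k_def ps_def by simp
  next
    fix i j assume i: "i < length (req_pairs R)" and j: "j < length (req_pairs R)"
      and ne: "\<not> pg_edge B (req_pairs R ! i) (req_pairs R ! j)"
    then show "col_rep R A1 $$ (i,j) = 0"
      using psP[of j] unfolding col_rep_index[OF i j] A1_def k_def ps_def pg_edge_def by auto
  qed
  have exR: "\<exists>r. \<exists>A' \<in> col_rep_image R. fits R B A' \<and> rk2 A' = r"
    using fit1 col_rep_imageI[of A1 R] A1c dR unfolding k_def ps_def by blast
  obtain A'0 where A'0: "A'0 \<in> col_rep_image R" "fits R B A'0" "rk2 A'0 = rminrk R B"
    using LeastI_ex[OF exR] unfolding rminrk_def by blast
  have rm_le: "rminrk R B \<le> rk2 A'" if "A' \<in> col_rep_image R" "fits R B A'" for A'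
    unfolding rminrk_def using that by (intro Least_le) blast

  have dir1: "rminrk R B \<le> C"
  proof -
    have \<beta>0c: "\<beta>0 \<in> carrier_mat C m" using sol_carrier[OF sol0] dR by simp
    have "\<forall>i<k. \<exists>\<alpha>\<in>carrier_vec (C + m).
        transpose_mat (\<beta>0 @\<^sub>r diag_row B (fst (ps!i))) *\<^sub>v \<alpha> = unit_vec m (snd (ps!i))"
      using sol_elim[OF sol0] psmem dR by (metis prod.collapse)
    then obtain \<alpha> where \<alpha>: "\<And>i. i < k \<Longrightarrow> \<alpha> i \<in> carrier_vec (C + m) \<and>
        transpose_mat (\<beta>0 @\<^sub>r diag_row B (fst (ps!i))) *\<^sub>v \<alpha> i = unit_vec m (snd (ps!i))"
      by metis
    have key: "(\<Sum>l<C. \<beta>0 $$ (l, snd (ps!j)) * \<alpha> i $ l)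
        + B $$ (fst (ps!i), snd (ps!j)) * \<alpha> i $ (C + snd (ps!j)) = unit_vec m (snd (ps!i)) $ (snd (ps!j))"
      if i: "i < k" and j: "j < k" for i j
      using sol_entry[OF \<beta>0c dB conjunct1[OF \<alpha>[OF i]], of "snd (ps!j)" "fst (ps!i)"]
        conjunct2[OF \<alpha>[OF i]] psP[OF j] by simp
    define \<Gamma> where "\<Gamma> = mat k C (\<lambda>(i,l). \<alpha> i $ l)"
    have \<Gamma>c: "\<Gamma> \<in> carrier_mat k C" unfolding \<Gamma>_def by simp
    define A0 where "A0 = \<Gamma> * \<beta>0"
    have A0c: "A0 \<in> carrier_mat k m" unfolding A0_def using \<Gamma>c \<beta>0c by simp
    define A' where "A' = col_rep R A0"
    have A'c: "A' \<in> carrier_mat k k" unfolding A'_def k_def ps_def by (rule col_rep_carrier)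
    have A'im: "A' \<in> col_rep_image R" unfolding A'_def
      using col_rep_imageI[of A0 R] A0c dR unfolding k_def ps_def by simp
    have A'e: "A' $$ (i,j) = (\<Sum>l<C. \<beta>0 $$ (l, snd (ps!j)) * \<alpha> i $ l)" if i: "i < k" and j: "j < k" for i j
    proof -
      have "A' $$ (i,j) = A0 $$ (i, snd (ps!j))"
        unfolding A'_def using col_rep_index i j unfolding k_def ps_def by blast
      also have "\<dots> = (\<Sum>l<C. \<beta>0 $$ (l, snd (ps!j)) * \<alpha> i $ l)"
        unfolding A0_def using \<Gamma>c \<beta>0c i psP[OF j]
        by (auto simp: scalar_prod_def \<Gamma>_def lessThan_atLeast0 mult.commute intro!: sum.cong)
      finally show ?thesis .
    qed
    have fitA': "fits R B A'"
    proof (rule fitsI)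
      show "A' \<in> carrier_mat (length (req_pairs R)) (length (req_pairs R))"
        using A'c unfolding k_def ps_def .
      fix i assume i: "i < length (req_pairs R)"
      then have i': "i < k" unfolding k_def ps_def .
      show "A' $$ (i,i) = 1"
        using key[OF i' i'] Bz[OF i'] psP[OF i'] unfolding A'e[OF i' i'] by simp
    next
      fix i j assume i: "i < length (req_pairs R)" and j: "j < length (req_pairs R)"
        and ne: "\<not> pg_edge B (req_pairs R ! i) (req_pairs R ! j)"
      then have i': "i < k" and j': "j < k" unfolding k_def ps_def by auto
      have "B $$ (fst (ps!i), snd (ps!j)) = 0" "snd (ps!i) \<noteq> snd (ps!j)"
        using ne unfolding pg_edge_def ps_def by auto
      then show "A' $$ (i,j) = 0"
        using key[OF i' j'] psP[OF i'] psP[OF j'] unfolding A'e[OF i' j'] by simp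
    qed
    have colA': "col A' j = \<Gamma> *\<^sub>v col \<beta>0 (snd (ps!j))" if j: "j < k" for j
    proof (rule eq_vecI)
      show "dim_vec (col A' j) = dim_vec (\<Gamma> *\<^sub>v col \<beta>0 (snd (ps!j)))" using A'c \<Gamma>c by simp
      fix i assume "i < dim_vec (\<Gamma> *\<^sub>v col \<beta>0 (snd (ps!j)))"
      then have i: "i < k" using \<Gamma>c by simp
      have "col A' j $ i = A0 $$ (i, snd (ps!j))"
        unfolding A'_def using col_rep_index i j A'c unfolding A'_def k_def ps_def by simp
      also have "\<dots> = (\<Gamma> *\<^sub>v col \<beta>0 (snd (ps!j))) $ i"
        unfolding A0_def using \<Gamma>c \<beta>0c i psP[OF j] by simp
      finally show "col A' j $ i = (\<Gamma> *\<^sub>v col \<beta>0 (snd (ps!j))) $ i" .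
    qed
    have sub: "set (cols A') \<subseteq> vs.span (set (cols \<Gamma>))"
    proof
      fix v assume "v \<in> set (cols A')"
      then obtain j where j: "j < k" and v: "v = col A' j"
        using A'c by (metis cols_length cols_nth in_set_conv_nth carrier_matD(2))
      have "\<Gamma> *\<^sub>v col \<beta>0 (snd (ps!j)) \<in> vs.col_space \<Gamma>"
        unfolding vs.col_space_eq[OF \<Gamma>c] using \<Gamma>c \<beta>0c psP[OF j] by auto
      then show "v \<in> vs.span (set (cols \<Gamma>))" unfolding v colA'[OF j] vs.col_space_def .
    qed
    have "rk2 A' \<le> C" unfolding rk2_def using A'c vs.rank_le_col_span[OF A'c \<Gamma>c sub] by simp
    then show ?thesis using rm_le[OF A'im fitA'] by simp
  qed

  have dir2: "C \<le> rminrk R B"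
  proof -
    obtain A0 where A0c: "A0 \<in> carrier_mat k m" and A'0e: "A'0 = col_rep R A0"
      using A'0(1) dR unfolding k_def ps_def by (auto elim: col_rep_imageE)
    have A'0c: "A'0 \<in> carrier_mat k k" unfolding A'0e k_def ps_def by (rule col_rep_carrier)
    define r where "r = rminrk R B"
    have rr: "vs.rank A'0 = r" using A'0(3) A'0c unfolding rk2_def r_def by simp
    obtain \<Gamma> where \<Gamma>c: "\<Gamma> \<in> carrier_mat k r" and sub: "set (cols A'0) \<subseteq> vs.span (set (cols \<Gamma>))"
      using vs.rank_factor[OF A'0c] rr by blast
    have "\<forall>j<k. \<exists>y\<in>carrier_vec r. \<Gamma> *\<^sub>v y = col A'0 j"
    proof (intro allI impI)
      fix j assume j: "j < k"
      have "col A'0 j \<in> set (cols A'0)" using j A'0c by (metis cols_length cols_nth nth_mem carrier_matD(2))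
      then have "col A'0 j \<in> vs.col_space \<Gamma>" using sub unfolding vs.col_space_def by blast
      then show "\<exists>y\<in>carrier_vec r. \<Gamma> *\<^sub>v y = col A'0 j"
        unfolding vs.col_space_eq[OF \<Gamma>c] using \<Gamma>c by auto
    qed
    then obtain x where x: "\<And>j. j < k \<Longrightarrow> x j \<in> carrier_vec r \<and> \<Gamma> *\<^sub>v x j = col A'0 j" by metis
    have A'0i: "A'0 $$ (i,j) = A0 $$ (i, snd (ps!j))" if "i < k" "j < k" for i j
      unfolding A'0e using col_rep_index that unfolding k_def ps_def by blast
    have key2: "A0 $$ (i, snd (ps!j)) = (\<Sum>l<r. \<Gamma> $$ (i,l) * x j $ l)" if i: "i < k" and j: "j < k" for i j
    proof -
      have "A0 $$ (i, snd (ps!j)) = col A'0 j $ i" using A'0i[OF i j] A'0c i j by simp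
      also have "\<dots> = (\<Gamma> *\<^sub>v x j) $ i" using x[OF j] by simp
      also have "\<dots> = (\<Sum>l<r. \<Gamma> $$ (i,l) * x j $ l)"
        using \<Gamma>c i conjunct1[OF x[OF j]] by (auto simp: scalar_prod_def lessThan_atLeast0 intro!: sum.cong)
      finally show ?thesis .
    qed
    define \<beta> where "\<beta> = mat r m (\<lambda>(l,b). if \<exists>j<k. snd (ps!j) = b
        then x (SOME j. j < k \<and> snd (ps!j) = b) $ l else 0)"
    have \<beta>c: "\<beta> \<in> carrier_mat r m" unfolding \<beta>_def by simp
    define s where "s i b = (\<Sum>l<r. \<Gamma> $$ (i,l) * \<beta> $$ (l,b))" for i b
    have fact1: "s i b = (if \<exists>j<k. snd (ps!j) = b then A0 $$ (i,b) else 0)" if i: "i < k" and b: "b < m" for i b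
    proof (cases "\<exists>j<k. snd (ps!j) = b")
      case True
      define j0 where "j0 = (SOME j. j < k \<and> snd (ps!j) = b)"
      have j0: "j0 < k" "snd (ps!j0) = b" using someI_ex[OF True[unfolded Bex_def[symmetric]]]
        unfolding j0_def by auto
      have "s i b = (\<Sum>l<r. \<Gamma> $$ (i,l) * x j0 $ l)"
        unfolding s_def using b True by (intro sum.cong) (auto simp: \<beta>_def j0_def)
      also have "\<dots> = A0 $$ (i,b)" using key2[OF i j0(1)] j0(2) by simp
      finally show ?thesis using True by simp
    next
      case False
      have "s i b = (\<Sum>l<r. 0)" unfolding s_def using b False by (intro sum.cong) (auto simp: \<beta>_def)
      then show ?thesis using False by auto
    qed
    have fact2: "s i b = unit_vec m (snd (ps!i)) $ b"
      if i: "i < k" and b: "b < m" and Bb: "B $$ (fst (ps!i), b) = 0" for i b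
    proof (cases "\<exists>j<k. snd (ps!j) = b")
      case True
      then obtain j where j: "j < k" "snd (ps!j) = b" by blast
      have sb: "s i b = A'0 $$ (i,j)" using fact1[OF i b] True A'0i[OF i j(1)] j by simp
      show ?thesis
      proof (cases "b = snd (ps!i)")
        case True
        have "s i b = A'0 $$ (i,i)" using fact1[OF i b] \<open>\<exists>j<k. snd (ps!j) = b\<close> A'0i[OF i i] True by simp
        also have "\<dots> = 1" using fitsD(2)[OF A'0(2)] i unfolding k_def ps_def by blast
        finally show ?thesis using True b by simp
      next
        case False
        have "i \<noteq> j" using False j by auto
        moreover have "\<not> pg_edge B (req_pairs R ! i) (req_pairs R ! j)"
          using Bb False j unfolding pg_edge_def ps_def by auto
        ultimately have "A'0 $$ (i,j) = 0" using fitsD(3)[OF A'0(2)] i j unfolding k_def ps_def by blast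
        then show ?thesis using sb False b psP[OF i] by simp
      qed
    next
      case False
      then have "b \<noteq> snd (ps!i)" using i by blast
      then show ?thesis using fact1[OF i b] False b psP[OF i] by simp
    qed
    have "cl_broadcast_solution R B r \<beta>"
    proof (rule sol_intro)
      show "\<beta> \<in> carrier_mat r (dim_col R)" using \<beta>c dR by simp
      fix u a assume p: "(u,a) \<in> set (req_pairs R)"
      then obtain i where i: "i < k" and pi: "ps!i = (u,a)"
        unfolding k_def ps_def by (metis in_set_conv_nth)
      have a: "a < m" using psP[OF i] pi by simp
      define \<alpha> where "\<alpha> = vec (r+m) (\<lambda>l. if l < r then \<Gamma> $$ (i,l) else unit_vec m a $ (l-r) + s i (l-r))"
      have "transpose_mat (\<beta> @\<^sub>r diag_row B u) *\<^sub>v \<alpha> = unit_vec m a"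
      proof (rule sol_char[OF \<beta>c dB _ a])
        fix b assume b: "b < m"
        have "(\<Sum>l<r. \<beta> $$ (l,b) * \<alpha> $ l) = s i b"
          unfolding s_def \<alpha>_def by (intro sum.cong) (auto simp: mult.commute)
        moreover have "\<alpha> $ (r+b) = unit_vec m a $ b + s i b" unfolding \<alpha>_def using b by simp
        moreover have "s i b + B $$ (u,b) * (unit_vec m a $ b + s i b) = unit_vec m a $ b"
        proof (cases "B $$ (u,b) = 0")
          case True
          then show ?thesis using fact2[OF i b] pi by simp
        next
          case False
          then have "B $$ (u,b) = 1" by simp
          then show ?thesis by (simp add: bit_cancel)
        qed
        ultimately show "(\<Sum>l<r. \<beta> $$ (l,b) * \<alpha> $ l) + B $$ (u,b) * \<alpha> $ (r+b) = unit_vec m a $ b"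
          by simp
      qed (simp add: \<alpha>_def)
      then show "\<exists>\<alpha>\<in>carrier_vec (r + dim_col R).
        transpose_mat (\<beta> @\<^sub>r diag_row B u) *\<^sub>v \<alpha> = unit_vec (dim_col R) a"
        using dR by (intro bexI[of _ \<alpha>]) (auto simp: \<alpha>_def)
    qed
    then show ?thesis using C_le r_def by blast
  qed
  show ?thesis using dir1 dir2 unfolding C_def by simp
qed

end
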